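(* Let $c_p>0$, let $\mathcal{T}=\{\tau_1,\dots,\tau_m\}$ be a finite set of keep-alive window lengths in $[0,\infty]$, let $n\ge 0$ and let $x_1,\dots,x_n>0$ be any inter-arrival times with history $\mathcal{H}_n=(x_1,\dots,x_n)$. For a report $\hat\theta\ge 0$, let $\tau_{\hat\theta,\mathcal{H}_n}$ be the random window length chosen by the exponentially weighted average custom policy (defined in the context). Then for every threshold $x>0$, the function $$\hat\theta\;\mapsto\;\Pr\big(\tau_{\hat\theta,\mathcal{H}_n}<x\big)=\sum_{\tau_j\in\mathcal{T},\ \tau_j<x}\frac{e^{-L_n(\tau_j,\mathcal{H}_n,\hat\theta)}}{\sum_{\tau_k\in\mathcal{T}}e^{-L_n(\tau_k,\mathcal{H}_n,\hat\theta)}}$$ is monotonically non-increasing on $[0,\infty)$, i.e. $\frac{\partial}{\partial\hat\theta}\Pr(\tau_{\hat\theta,\mathcal{H}_n}<x)\le 0$. In particular, the probability that the policy produces a cold start on an arrival with inter-arrival time $x$ (namely $\Pr(\tau_{\hat\theta,\mathcal{H}_n}<x)$) is non-increasing in the reported cold-start cost $\hat\theta$.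
   Context: Keep-alive (TTL) caching model. A cost $c_p>0$ per unit time is incurred for keeping an application in cache. For a window length $\tau\in[0,\infty]$ and an inter-arrival time $x>0$: the cold-start indicator is $cs(\tau,x)=0$ if $x\le\tau$ and $cs(\tau,x)=1$ if $x>\tau$; the wasted-memory cost is $wm(\tau,x)=c_p x$ if $x\le \tau$ and $wm(\tau,x)=c_p\tau$ if $x>\tau$ (so $wm(\infty,x)=c_px$, $cs(\infty,x)=0$). For a history of inter-arrival times $\mathcal{H}_n=(x_1,\dots,x_n)$, a fixed window $\tau$ and a parameter $\theta\ge0$, the cumulative loss is $L_n(\tau,\mathcal{H}_n,\theta)=\sum_{j=1}^n wm(\tau,x_j)+\theta\sum_{j=1}^n cs(\tau,x_j)$. The exponentially weighted average custom policy with finite expert set $\mathcal{T}$, given report $\hat\theta$ and history $\mathcal{H}_n$, chooses $\tau_j\in\mathcal{T}$ with probability $\Pr(\tau_{\hat\theta,\mathcal{H}_n}=\tau_j)=e^{-L_n(\tau_j,\mathcal{H}_n,\hat\theta)}/\sum_{\tau_k\in\mathcal{T}}e^{-L_n(\tau_k,\mathcal{H}_n,\hat\theta)}$. *)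

theory Defs
  imports "HOL-Analysis.Analysis"
begin

text \<open>Window lengths live in [0,\<infinity>], modelled as extended reals (ereal) that are \<ge> 0.\<close>

definition cs :: "ereal \<Rightarrow> real \<Rightarrow> real" where
  "cs \<tau> x = (if ereal x \<le> \<tau> then 0 else 1)"

definition wm :: "real \<Rightarrow> ereal \<Rightarrow> real \<Rightarrow> real" where
  "wm cp \<tau> x = (if ereal x \<le> \<tau> then cp * x else cp * real_of_ereal \<tau>)"

definition cum_loss :: "real \<Rightarrow> ereal \<Rightarrow> real list \<Rightarrow> real \<Rightarrow> real" where
  "cum_loss cp \<tau> H \<theta> = (\<Sum>x\<leftarrow>H. wm cp \<tau> x) + \<theta> * (\<Sum>x\<leftarrow>H. cs \<tau> x)"

definition ewa_prob :: "real \<Rightarrow> ereal set \<Rightarrow> real list \<Rightarrow> real \<Rightarrow> ereal \<Rightarrow> real" where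
  "ewa_prob cp T H \<theta> \<tau> =
     exp (- cum_loss cp \<tau> H \<theta>) / (\<Sum>\<tau>k\<in>T. exp (- cum_loss cp \<tau>k H \<theta>))"

definition prob_window_less :: "real \<Rightarrow> ereal set \<Rightarrow> real list \<Rightarrow> real \<Rightarrow> real \<Rightarrow> real" where
  "prob_window_less cp T H \<theta> x = (\<Sum>\<tau>\<in>{\<tau>\<in>T. \<tau> < ereal x}. ewa_prob cp T H \<theta> \<tau>)"

end

theory Submission
  imports Defs
begin

lemma cs_mono: "a \<le> b \<Longrightarrow> cs b y \<le> cs a y"
  unfolding cs_def by auto

lemma csum_mono: "a \<le> b \<Longrightarrow> (\<Sum>y\<leftarrow>H. cs b y) \<le> (\<Sum>y\<leftarrow>H. cs a y)"
  by (rule sum_list_mono) (rule cs_mono)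

lemma pair_ineq:
  assumes "a \<le> b" "t1 \<le> t2"
  shows "exp (- cum_loss cp a H t2) * exp (- cum_loss cp b H t1)
       \<le> exp (- cum_loss cp a H t1) * exp (- cum_loss cp b H t2)"
proof -
  have c: "(\<Sum>y\<leftarrow>H. cs b y) \<le> (\<Sum>y\<leftarrow>H. cs a y)" using csum_mono[OF assms(1)] .
  have "(t2 - t1) * (\<Sum>y\<leftarrow>H. cs b y) \<le> (t2 - t1) * (\<Sum>y\<leftarrow>H. cs a y)"
    using c assms(2) by (intro mult_left_mono) auto
  then have "- cum_loss cp a H t2 + - cum_loss cp b H t1 \<le> - cum_loss cp a H t1 + - cum_loss cp b H t2"
    unfolding cum_loss_def by (simp add: algebra_simps)
  then show ?thesis by (simp add: exp_add[symmetric])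
qed

theorem lemma5p1:
  fixes cp :: real and T :: "ereal set" and H :: "real list" and x :: real
  assumes "cp > 0"
    and "finite T" and "T \<noteq> {}" and "\<forall>\<tau>\<in>T. 0 \<le> \<tau>"
    and "\<forall>y\<in>set H. y > 0"
    and "x > 0"
  shows "\<forall>\<theta>1 \<theta>2. 0 \<le> \<theta>1 \<longrightarrow> \<theta>1 \<le> \<theta>2 \<longrightarrow>
           prob_window_less cp T H \<theta>2 x \<le> prob_window_less cp T H \<theta>1 x"
proof (intro allI impI)
  fix t1 t2 :: real
  assume h: "0 \<le> t1" "t1 \<le> t2"
  define e where "e t \<tau> = exp (- cum_loss cp \<tau> H t)" for t \<tau>
  define A where "A = {\<tau>\<in>T. \<tau> < ereal x}"
  define B where "B = T - A"
  have fA: "finite A" and fB: "finite B" using assms(2) by (auto simp: A_def B_def)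
  have TAB: "T = A \<union> B" "A \<inter> B = {}" by (auto simp: A_def B_def)
  define SA where "SA t = (\<Sum>\<tau>\<in>A. e t \<tau>)" for t
  define SB where "SB t = (\<Sum>\<tau>\<in>B. e t \<tau>)" for t
  have Z: "(\<Sum>\<tau>\<in>T. e t \<tau>) = SA t + SB t" for t
    unfolding SA_def SB_def using fA fB TAB by (simp add: sum.union_disjoint)
  have P: "prob_window_less cp T H t x = SA t / (SA t + SB t)" for t
  proof -
    have "prob_window_less cp T H t x = (\<Sum>\<tau>\<in>A. e t \<tau> / (\<Sum>\<tau>\<in>T. e t \<tau>))"
      unfolding prob_window_less_def ewa_prob_def A_def e_def by simp
    also have "\<dots> = SA t / (\<Sum>\<tau>\<in>T. e t \<tau>)"
      unfolding SA_def by (simp add: sum_divide_distrib)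
    finally show ?thesis using Z[of t] by simp
  qed
  have SAnn: "SA t \<ge> 0" "SB t \<ge> 0" for t
    unfolding SA_def SB_def e_def by (auto intro: sum_nonneg)
  have Zpos: "SA t + SB t > 0" for t
  proof -
    obtain \<tau> where "\<tau> \<in> T" using assms(3) by auto
    then have "(\<Sum>\<tau>\<in>T. e t \<tau>) > 0"
      using assms(2,3) by (intro sum_pos) (auto simp: e_def)
    then show ?thesis using Z by simp
  qed
  have key: "SA t2 * SB t1 \<le> SA t1 * SB t2"
  proof -
    have "SA t2 * SB t1 = (\<Sum>a\<in>A. \<Sum>b\<in>B. e t2 a * e t1 b)"
      unfolding SA_def SB_def by (simp add: sum_product)
    also have "\<dots> \<le> (\<Sum>a\<in>A. \<Sum>b\<in>B. e t1 a * e t2 b)"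
    proof (intro sum_mono)
      fix a b assume "a \<in> A" "b \<in> B"
      then have "a \<le> b" by (auto simp: A_def B_def)
      then show "e t2 a * e t1 b \<le> e t1 a * e t2 b"
        unfolding e_def using pair_ineq h(2) by blast
    qed
    also have "\<dots> = SA t1 * SB t2"
      unfolding SA_def SB_def by (simp add: sum_product)
    finally show ?thesis .
  qed
  have "SA t2 * (SA t1 + SB t1) \<le> SA t1 * (SA t2 + SB t2)"
    using key by (simp add: algebra_simps)
  then have "SA t2 / (SA t2 + SB t2) \<le> SA t1 / (SA t1 + SB t1)"
    using Zpos[of t1] Zpos[of t2] by (simp add: divide_simps mult.commute)
  then show "prob_window_less cp T H t2 x \<le> prob_window_less cp T H t1 x"
    by (simp add: P)
qed

end
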